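(* Let $\alpha=\{a_k\}_{k\ge1}$ be a sequence of positive real numbers such that $A^*(m):=\#\{k: a_k\le m\}$ satisfies $A^*(m)=O(m^\nu)$ as $m\to\infty$ for some $\nu>0$. Then $\lim_{N\to\infty}E[U_j^N]=I(\alpha;j)<\infty$ for all $j\ge2$.
   Context: For $N\ge2$, coupon type $k\in\{1,\dots,N\}$ has probability $a_k/\sum_{i=1}^Na_i$; $U_j^N$ is the number of empty album places of the $j$-th collector when the first collector completes her set (each collector passes duplicates to the next one), with $$E[U_j^N]=\sum_{k=1}^N\int_0^\infty a_k e^{-a_k t}\frac{(a_kt)^{j-1}}{(j-1)!}\prod_{i\ne k,\,1\le i\le N}\big(1-e^{-a_i t}\big)\,dt.$$ $x_\alpha:=\inf\{x\in[0,1]:\sum_k x^{a_k}=\infty\}$, $L(x;\alpha;j):=\sum_{k}a_k^j\frac{x^{a_k}}{1-x^{a_k}}$, $F(x;\alpha):=\prod_{k}(1-x^{a_k})$, $I(\alpha;j):=\frac{1}{(j-1)!}\int_0^{x_\alpha}L(x;\alpha;j)F(x;\alpha)|\ln x|^{j-1}\frac{dx}{x}$. *)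

theory Defs
  imports "HOL-Analysis.Analysis" "HOL-Library.Landau_Symbols"
begin

text \<open>Coupon weights are a :: nat => real, used at indices k >= 1.\<close>

text \<open>E[U_j^N], given by the explicit integral formula of the paper.\<close>
definition EU :: "(nat \<Rightarrow> real) \<Rightarrow> nat \<Rightarrow> nat \<Rightarrow> real" where
  "EU a N j = (\<Sum>k=1..N. LINT t:{0..}|lborel.
      a k * exp (- a k * t) * (a k * t) ^ (j - 1) / fact (j - 1) *
      (\<Prod>i\<in>{1..N} - {k}. 1 - exp (- a i * t)))"

definition x_alpha :: "(nat \<Rightarrow> real) \<Rightarrow> real" where
  "x_alpha a = Inf {x \<in> {0..1}. \<not> summable (\<lambda>k. x powr a (Suc k))}"

definition L_fun :: "real \<Rightarrow> (nat \<Rightarrow> real) \<Rightarrow> nat \<Rightarrow> real" where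
  "L_fun x a j = (\<Sum>k. a (Suc k) ^ j * x powr a (Suc k) / (1 - x powr a (Suc k)))"

definition F_fun :: "real \<Rightarrow> (nat \<Rightarrow> real) \<Rightarrow> real" where
  "F_fun x a = (\<Prod>k. 1 - x powr a (Suc k))"

definition I_integrand :: "(nat \<Rightarrow> real) \<Rightarrow> nat \<Rightarrow> real \<Rightarrow> real" where
  "I_integrand a j x = L_fun x a j * F_fun x a * \<bar>ln x\<bar> ^ (j - 1) / x / fact (j - 1)"

definition I_val :: "(nat \<Rightarrow> real) \<Rightarrow> nat \<Rightarrow> real" where
  "I_val a j = (LINT x:{0<..<x_alpha a}|lborel. I_integrand a j x)"

end

theory Submission imports Defs "HOL-Probability.Probability" begin

lemma exp_ge_pow_fact:
  fixes y :: real assumes "0 \<le> y" shows "y ^ n / fact n \<le> exp y"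
proof -
  have s: "(\<lambda>i. y ^ i / fact i) sums exp y"
    using exp_converges[of y] by (simp add: divide_inverse ac_simps)
  have "(\<Sum>i\<in>{n}. y ^ i / fact i) \<le> (\<Sum>i. y ^ i / fact i)"
    by (rule sum_le_suminf) (use s assms in \<open>auto simp: sums_iff\<close>)
  with s show ?thesis by (simp add: sums_iff)
qed

lemma summable_inv_pow:
  fixes a :: "nat \<Rightarrow> real" and C mm \<nu> :: real and Q :: nat
  assumes pos: "\<And>k. k \<ge> 1 \<Longrightarrow> a k > 0"
    and fin: "\<And>m::real. finite {k. k \<ge> 1 \<and> a k \<le> m}"
    and cnt: "\<And>m. m \<ge> mm \<Longrightarrow> real (card {k. k \<ge> 1 \<and> a k \<le> m}) \<le> C * m powr \<nu>"
    and C: "C \<ge> 0"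
    and Q: "\<nu> < real Q"
  shows "summable (\<lambda>n. 1 / a (Suc n) ^ Q)"
proof -
  define R where "R = max mm 1"
  have R1: "R \<ge> 1" and Rm0: "R \<ge> mm" by (auto simp: R_def)
  define e where "e k = nat \<lfloor>log 2 (a k / R)\<rfloor>" for k
  define \<rho> where "\<rho> = 2 powr \<nu> / 2 ^ Q"
  have \<rho>0: "0 \<le> \<rho>" by (simp add: \<rho>_def)
  have "2 powr \<nu> < 2 powr real Q" using Q by simp
  hence \<rho>1: "\<rho> < 1" by (simp add: \<rho>_def powr_realpow)
  define A0 where "A0 = {k. k \<ge> 1 \<and> a k \<le> R}"
  define B0 where "B0 = (\<Sum>k\<in>A0. 1 / a k ^ Q)"
  define K where "K = C * R powr \<nu> * 2 powr \<nu> / R ^ Q"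
  have K0: "K \<ge> 0" using C R1 by (simp add: K_def)
  have fA0: "finite A0" using fin by (simp add: A0_def)
  have ebound: "R * 2 ^ e k \<le> a k \<and> a k < R * 2 ^ (Suc (e k))" if "a k > R" for k
  proof -
    define y where "y = a k / R"
    have y1: "y > 1" using that R1 by (simp add: y_def)
    define l where "l = log 2 y"
    have l0: "l > 0" using y1 by (simp add: l_def)
    have fl: "real (e k) = of_int \<lfloor>l\<rfloor>" using l0 by (simp add: e_def l_def y_def)
    have "2 powr real (e k) \<le> 2 powr l" using fl by simp
    also have "2 powr l = y" using y1 by (simp add: l_def)
    finally have 1: "2 ^ e k \<le> y" by (simp add: powr_realpow)
    have "y = 2 powr l" using y1 by (simp add: l_def)
    also have "2 powr l < 2 powr real (Suc (e k))"
    proof -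
      have "l < real (e k) + 1" using fl real_of_int_floor_add_one_gt[of l] by linarith
      thus ?thesis by simp
    qed
    finally have 2: "y < 2 ^ Suc (e k)" by (simp only: powr_realpow)
    show ?thesis using 1 2 R1 by (simp add: y_def field_simps)
  qed
  have fib: "(\<Sum>k\<in>{x \<in> S. e x = y}. 1 / a k ^ Q) \<le> K * \<rho> ^ y"
    if S: "S \<subseteq> {k. k \<ge> 1 \<and> a k > R}" "finite S" for S y
  proof -
    have "(\<Sum>k\<in>{x \<in> S. e x = y}. 1 / a k ^ Q) \<le> (\<Sum>k\<in>{x \<in> S. e x = y}. 1 / (R * 2 ^ y) ^ Q)"
    proof (rule sum_mono)
      fix k assume k: "k \<in> {x \<in> S. e x = y}"
      hence "R * 2 ^ y \<le> a k" using ebound[of k] S by auto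
      moreover have "R * 2 ^ y > 0" using R1 by simp
      ultimately show "1 / a k ^ Q \<le> 1 / (R * 2 ^ y) ^ Q"
        by (intro divide_left_mono power_mono mult_pos_pos) auto
    qed
    also have "\<dots> = real (card {x \<in> S. e x = y}) / (R * 2 ^ y) ^ Q" by simp
    also have "\<dots> \<le> real (card {k. k \<ge> 1 \<and> a k \<le> R * 2 ^ Suc y}) / (R * 2 ^ y) ^ Q"
    proof -
      have "{x \<in> S. e x = y} \<subseteq> {k. k \<ge> 1 \<and> a k \<le> R * 2 ^ Suc y}"
        using ebound S by fastforce
      hence "card {x \<in> S. e x = y} \<le> card {k. k \<ge> 1 \<and> a k \<le> R * 2 ^ Suc y}"
        by (intro card_mono fin)
      thus ?thesis using R1 by (intro divide_right_mono) auto
    qed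
    also have "\<dots> \<le> C * (R * 2 ^ Suc y) powr \<nu> / (R * 2 ^ y) ^ Q"
    proof -
      have "R * 2 ^ Suc y \<ge> mm" using Rm0 R1
        by (smt (verit) mult_le_cancel_left1 one_le_power)
      thus ?thesis using cnt R1 by (intro divide_right_mono) auto
    qed
    also have "\<dots> = K * \<rho> ^ y"
    proof -
      have "(R * 2 ^ Suc y) powr \<nu> = R powr \<nu> * 2 powr \<nu> * (2 powr \<nu>) ^ y"
        using R1 by (simp add: powr_mult powr_realpow[symmetric] powr_powr mult_ac
            powr_add[symmetric] distrib_left)
      thus ?thesis using R1 by (simp add: K_def \<rho>_def power_mult_distrib power_divide field_simps flip: power_mult)
    qed
    finally show ?thesis .
  qed
  define B where "B = B0 + K * (\<Sum>i. \<rho> ^ i)"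
  show ?thesis
  proof (rule summableI_nonneg_bounded[where x = B])
    fix n show "0 \<le> 1 / a (Suc n) ^ Q" using pos[of "Suc n"] by simp
  next
    fix n :: nat
    define T where "T = {1..n}"
    have "(\<Sum>i<n. 1 / a (Suc i) ^ Q) = (\<Sum>k\<in>T. 1 / a k ^ Q)"
      unfolding T_def by (simp add: sum.atLeast1_atMost_eq)
    also have "\<dots> = (\<Sum>k\<in>T \<inter> A0. 1 / a k ^ Q) + (\<Sum>k\<in>T - A0. 1 / a k ^ Q)"
      by (rule sum.Int_Diff) (simp add: T_def)
    also have "(\<Sum>k\<in>T \<inter> A0. 1 / a k ^ Q) \<le> B0"
      unfolding B0_def using fA0 pos by (intro sum_mono2) (auto simp: A0_def less_imp_le)
    also have "(\<Sum>k\<in>T - A0. 1 / a k ^ Q) =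
        (\<Sum>y\<in>e ` (T - A0). \<Sum>k\<in>{x \<in> T - A0. e x = y}. 1 / a k ^ Q)"
      by (rule sum.group[symmetric]) (auto simp: T_def)
    also have "\<dots> \<le> (\<Sum>y\<in>e ` (T - A0). K * \<rho> ^ y)"
      by (intro sum_mono fib) (auto simp: T_def A0_def)
    also have "\<dots> \<le> (\<Sum>y. K * \<rho> ^ y)"
      using \<rho>0 \<rho>1 K0 by (intro sum_le_suminf summable_mult summable_geometric) (auto simp: T_def)
    also have "\<dots> = K * (\<Sum>y. \<rho> ^ y)"
      using \<rho>0 \<rho>1 by (intro suminf_mult summable_geometric) auto
    finally show "(\<Sum>i<n. 1 / a (Suc i) ^ Q) \<le> B" by (simp add: B_def)
  qed
qed


lemma exp_powr_eq: "exp (-t) powr b = exp (- b * t :: real)"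
proof -
  have "ln (exp (-t)) = -t" by simp
  thus ?thesis unfolding powr_def by simp
qed

lemma pow_exp_bound:
  fixes a t :: real assumes "a > 0" "t > 0"
  shows "a ^ p * exp (- a * t) \<le> fact (p + Q) / t ^ (p + Q) * (1 / a ^ Q)"
proof -
  have e: "(a * t) ^ (p + Q) / fact (p + Q) \<le> exp (a * t)"
    using assms by (intro exp_ge_pow_fact) simp
  have pos: "(a * t) ^ (p + Q) > 0" using assms by simp
  have "exp (- a * t) = 1 / exp (a * t)" by (simp add: exp_minus field_simps)
  also have "\<dots> \<le> fact (p + Q) / (a * t) ^ (p + Q)"
    using e pos by (simp add: field_simps)
  finally have "a ^ p * exp (- a * t) \<le> a ^ p * (fact (p + Q) / (a * t) ^ (p + Q))"
    using assms by (intro mult_left_mono) auto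
  also have "\<dots> = fact (p + Q) / t ^ (p + Q) * (1 / a ^ Q)"
    using assms by (simp add: power_mult_distrib power_add field_simps)
  finally show ?thesis .
qed

lemma summable_pow_exp:
  fixes a :: "nat \<Rightarrow> real"
  assumes pos: "\<And>k. k \<ge> 1 \<Longrightarrow> a k > 0"
    and S: "summable (\<lambda>n. 1 / a (Suc n) ^ Q)" and t: "t > 0"
  shows "summable (\<lambda>n. a (Suc n) ^ p * exp (- a (Suc n) * t))"
proof (rule summable_comparison_test')
  show "summable (\<lambda>n. fact (p + Q) / t ^ (p + Q) * (1 / a (Suc n) ^ Q))"
    by (intro summable_mult S)
  fix n :: nat
  show "norm (a (Suc n) ^ p * exp (- a (Suc n) * t)) \<le> fact (p + Q) / t ^ (p + Q) * (1 / a (Suc n) ^ Q)"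
    using pos[of "Suc n"] t pow_exp_bound[of "a (Suc n)" t p Q] by simp
qed

lemma inv_one_minus_exp_le:
  fixes y :: real assumes "y > 0" shows "1 / (1 - exp (- y)) \<le> 1 + 1 / y"
proof -
  have "1 + y \<le> exp y" by (rule exp_ge_add_one_self)
  hence "exp (-y) \<le> 1 / (1 + y)" using assms by (simp add: exp_minus field_simps)
  hence "1 - exp (-y) \<ge> y / (1 + y)" using assms by (simp add: field_simps)
  moreover have "y / (1 + y) > 0" using assms by simp
  moreover have "1 - exp (-y) > 0" using assms by simp
  ultimately have "1 / (1 - exp (- y)) \<le> 1 / (y / (1 + y))"
    by (intro divide_left_mono) auto
  also have "\<dots> = 1 + 1 / y" using assms by (simp add: field_simps)
  finally show ?thesis .
qed

lemma summable_L:
  fixes a :: "nat \<Rightarrow> real"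
  assumes pos: "\<And>k. k \<ge> 1 \<Longrightarrow> a k > 0"
    and S: "summable (\<lambda>n. 1 / a (Suc n) ^ Q)" and t: "t > 0" and j: "j \<ge> 1"
  shows "summable (\<lambda>n. a (Suc n) ^ j * exp (-t) powr a (Suc n) / (1 - exp (-t) powr a (Suc n)))"
proof (rule summable_comparison_test')
  show "summable (\<lambda>n. a (Suc n) ^ j * exp (- a (Suc n) * t) + 
          a (Suc n) ^ (j - 1) * exp (- a (Suc n) * t) / t)"
    by (intro summable_add summable_divide summable_pow_exp[OF pos S t])
  fix n :: nat
  define b where "b = a (Suc n)"
  have b: "b > 0" using pos[of "Suc n"] by (simp add: b_def)
  have e1: "exp (- b * t) < 1" using b t by simp
  have "a (Suc n) ^ j * exp (-t) powr a (Suc n) / (1 - exp (-t) powr a (Suc n))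
      = b ^ j * exp (- b * t) * (1 / (1 - exp (- (b * t))))"
    by (simp add: exp_powr_eq b_def)
  also have "\<dots> \<le> b ^ j * exp (- b * t) * (1 + 1 / (b * t))"
    using b t by (intro mult_left_mono inv_one_minus_exp_le) auto
  also have "\<dots> = b ^ j * exp (- b * t) + b ^ (j - 1) * exp (- b * t) / t"
  proof -
    have "b ^ j = b * b ^ (j - 1)" using j by (simp add: power_eq_if)
    thus ?thesis using b t by (simp add: field_simps)
  qed
  finally have le: "a (Suc n) ^ j * exp (-t) powr a (Suc n) / (1 - exp (-t) powr a (Suc n))
      \<le> b ^ j * exp (- b * t) + b ^ (j - 1) * exp (- b * t) / t" .
  have ge: "0 \<le> a (Suc n) ^ j * exp (-t) powr a (Suc n) / (1 - exp (-t) powr a (Suc n))"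
    using b e1 by (simp add: exp_powr_eq b_def)
  show "norm (a (Suc n) ^ j * exp (-t) powr a (Suc n) / (1 - exp (-t) powr a (Suc n)))
      \<le> a (Suc n) ^ j * exp (- a (Suc n) * t) + a (Suc n) ^ (j - 1) * exp (- a (Suc n) * t) / t"
    using le ge by (subst real_norm_def, subst abs_of_nonneg[OF ge]) (simp add: b_def)
qed

lemma prod_tendsto_F:
  fixes a :: "nat \<Rightarrow> real"
  assumes pos: "\<And>k. k \<ge> 1 \<Longrightarrow> a k > 0"
    and S: "summable (\<lambda>n. 1 / a (Suc n) ^ Q)" and t: "t > 0"
  shows "(\<lambda>N. \<Prod>n<N. 1 - exp (-t) powr a (Suc n)) \<longlonglongrightarrow> F_fun (exp (-t)) a"
proof -
  have sm: "summable (\<lambda>n. norm ((1 - exp (-t) powr a (Suc n)) - 1))"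
    using summable_pow_exp[OF pos S t, of 0] by (simp add: exp_powr_eq)
  have "convergent_prod (\<lambda>n. 1 - exp (-t) powr a (Suc n))"
    by (intro abs_convergent_prod_imp_convergent_prod summable_imp_abs_convergent_prod sm)
  hence "(\<lambda>N. \<Prod>n\<le>N. 1 - exp (-t) powr a (Suc n)) \<longlonglongrightarrow> F_fun (exp (-t)) a"
    unfolding F_fun_def by (rule convergent_prod_LIMSEQ)
  hence "(\<lambda>N. \<Prod>n<Suc N. 1 - exp (-t) powr a (Suc n)) \<longlonglongrightarrow> F_fun (exp (-t)) a"
    by (simp add: lessThan_Suc_atMost)
  thus ?thesis by (rule filterlim_sequentially_Suc[THEN iffD1])
qed

lemma x_alpha_eq_1:
  fixes a :: "nat \<Rightarrow> real"
  assumes pos: "\<And>k. k \<ge> 1 \<Longrightarrow> a k > 0"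
    and S: "summable (\<lambda>n. 1 / a (Suc n) ^ Q)"
  shows "x_alpha a = 1"
proof -
  have "{x \<in> {0..1}. \<not> summable (\<lambda>k. x powr a (Suc k))} = {1}"
  proof (intro equalityI subsetI)
    fix x assume x: "x \<in> {x \<in> {0..1}. \<not> summable (\<lambda>k. x powr a (Suc k))}"
    show "x \<in> {1}"
    proof (rule ccontr)
      assume "x \<notin> {1}"
      with x have x01: "0 \<le> x" "x < 1" by auto
      show False
      proof (cases "x = 0")
        case True thus False using x by simp
      next
        case False
        define t where "t = - ln x"
        have t: "t > 0" using x01 False by (simp add: t_def)
        have "x = exp (-t)" using x01 False by (simp add: t_def)
        hence "summable (\<lambda>k. x powr a (Suc k))"
          using summable_pow_exp[OF pos S t, of 0] by (simp add: exp_powr_eq)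
        thus False using x by simp
      qed
    qed
  next
    fix x assume "x \<in> {1::real}"
    thus "x \<in> {x \<in> {0..1}. \<not> summable (\<lambda>k. x powr a (Suc k))}" by (simp add: summable_const_iff)
  qed
  thus ?thesis by (simp add: x_alpha_def)
qed

lemma prod_bound:
  fixes a :: "nat \<Rightarrow> real" and c t :: real
  assumes pos: "\<And>k. k \<ge> 1 \<Longrightarrow> a k > 0"
    and c: "\<And>i. i \<in> {1..Suc Q} \<Longrightarrow> a i \<le> c" and t: "t \<ge> 0" and N: "N \<ge> Suc Q"
  shows "(\<Prod>i\<in>{1..N} - {k}. 1 - exp (- a i * t)) \<le> (c * t) ^ Q"
proof -
  define m where "m = min 1 (c * t)"
  have f01: "0 \<le> 1 - exp (- a i * t) \<and> 1 - exp (- a i * t) \<le> 1" if "i \<ge> 1" for i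
    using pos[OF that] t by (auto simp: mult_nonneg_nonneg)
  define S where "S = {1..Suc Q} - {k}"
  have SS: "S \<subseteq> {1..N} - {k}" using N by (auto simp: S_def)
  have "(\<Prod>i\<in>{1..N} - {k}. 1 - exp (- a i * t)) =
        (\<Prod>i\<in>S. 1 - exp (- a i * t)) * (\<Prod>i\<in>({1..N} - {k}) - S. 1 - exp (- a i * t))"
    using SS by (subst prod.subset_diff[OF SS]) auto
  also have "\<dots> \<le> (\<Prod>i\<in>S. 1 - exp (- a i * t)) * 1"
    using f01 by (intro mult_left_mono prod_le_1 prod_nonneg) (auto simp: S_def)
  also have "\<dots> \<le> (\<Prod>i\<in>S. m)"
  proof -
    have le_m: "1 - exp (- a i * t) \<le> m" if "i \<in> S" for i
    proof -
      have i: "i \<ge> 1" "a i \<le> c" using that c by (auto simp: S_def)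
      have "1 - exp (- (a i * t)) \<le> a i * t" using exp_ge_add_one_self[of "- (a i * t)"] by simp
      also have "\<dots> \<le> c * t" using i t by (intro mult_right_mono) auto
      finally show ?thesis using f01[OF i(1)] by (simp add: m_def)
    qed
    have "(\<Prod>i\<in>S. 1 - exp (- a i * t)) \<le> (\<Prod>i\<in>S. m)"
      by (rule prod_mono) (use f01 le_m in \<open>auto simp: S_def\<close>)
    thus ?thesis by simp
  qed
  also have "\<dots> = m ^ card S" by simp
  also have "\<dots> \<le> m ^ Q"
  proof -
    have "card S \<ge> Q"
    proof -
      have "card S \<ge> card {1..Suc Q} - 1" unfolding S_def using diff_card_le_card_Diff[of "{k}" "{1..Suc Q}"] by simp
      thus ?thesis by simp
    qed
    moreover have "0 \<le> m" "m \<le> 1"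
      using c[of 1] pos[of 1] t by (auto simp: m_def)
    ultimately show ?thesis by (intro power_decreasing) auto
  qed
  also have "\<dots> \<le> (c * t) ^ Q"
    using c[of 1] pos[of 1] t by (intro power_mono) (auto simp: m_def)
  finally show ?thesis .
qed


lemma erlang_moment_integrable:
  fixes l :: real assumes "l > 0"
  shows "integrable lborel (\<lambda>t. erlang_density k l t * t ^ i)"
    and "integral\<^sup>L lborel (\<lambda>t. erlang_density k l t * t ^ i) = fact (k + i) / (fact k * l ^ i)"
proof -
  have nn: "AE t in lborel. 0 \<le> erlang_density k l t * t ^ i"
    using assms by (auto simp: erlang_density_def)
  have *: "integrable lborel (\<lambda>t. erlang_density k l t * t ^ i) \<and>
      integral\<^sup>L lborel (\<lambda>t. erlang_density k l t * t ^ i) = fact (k + i) / (fact k * l ^ i)"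
    using assms by (subst nn_integral_eq_integrable[symmetric])
      (auto simp: nn nn_integral_erlang_ith_moment)
  thus "integrable lborel (\<lambda>t. erlang_density k l t * t ^ i)"
    "integral\<^sup>L lborel (\<lambda>t. erlang_density k l t * t ^ i) = fact (k + i) / (fact k * l ^ i)" by auto
qed

lemma erlang_integrable:
  fixes l :: real assumes "l > 0"
  shows "integrable lborel (erlang_density k l)"
  using erlang_moment_integrable(1)[OF assms, of k 0] by simp

theorem mainTheorem11:
  fixes a :: "nat \<Rightarrow> real" and j :: nat
  assumes pos: "\<And>k. k \<ge> 1 \<Longrightarrow> a k > 0"
    and fin: "\<And>m::real. finite {k. k \<ge> 1 \<and> a k \<le> m}"
    and growth: "\<exists>\<nu>>0. (\<lambda>m::real. real (card {k. k \<ge> 1 \<and> a k \<le> m})) \<in> O[at_top](\<lambda>m. m powr \<nu>)"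
    and j: "j \<ge> 2"
  shows "set_integrable lborel {0<..<x_alpha a} (I_integrand a j)
     \<and> (\<lambda>N. EU a N j) \<longlonglongrightarrow> I_val a j"
proof -
  from growth obtain \<nu> where \<nu>: "\<nu> > 0"
    and bo: "(\<lambda>m::real. real (card {k. k \<ge> 1 \<and> a k \<le> m})) \<in> O[at_top](\<lambda>m. m powr \<nu>)" by blast
  from bo obtain C where C: "C > 0"
    and ev: "eventually (\<lambda>m. norm (real (card {k. k \<ge> 1 \<and> a k \<le> m})) \<le> C * norm (m powr \<nu>)) at_top"
    by (elim landau_o.bigE)
  from ev obtain m0 where m0: "\<And>m. m \<ge> m0 \<Longrightarrow>
      norm (real (card {k. k \<ge> 1 \<and> a k \<le> m})) \<le> C * norm (m powr \<nu>)"
    by (auto simp: eventually_at_top_linorder)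
  have cnt: "real (card {k. k \<ge> 1 \<and> a k \<le> m}) \<le> C * m powr \<nu>" if "m \<ge> max m0 1" for m
    using m0[of m] that by simp
  define Q where "Q = nat \<lceil>\<nu>\<rceil> + 1"
  have Q\<nu>: "\<nu> < real Q" unfolding Q_def using \<nu> by linarith
  have Q1: "Q \<ge> 1" by (simp add: Q_def)
  have S: "summable (\<lambda>n. 1 / a (Suc n) ^ Q)"
    using summable_inv_pow[where mm="max m0 1" and C=C and \<nu>=\<nu> and Q=Q and a=a] pos fin cnt C Q\<nu>
    by auto
  have xa: "x_alpha a = 1" by (rule x_alpha_eq_1[OF pos S])
  define c where "c = (\<Sum>i\<in>{1..Suc Q}. a i)"
  have c: "a i \<le> c" if "i \<in> {1..Suc Q}" for i
    unfolding c_def using that pos by (intro member_le_sum) (auto simp: less_imp_le)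
  have c0: "c \<ge> 0" using c[of 1] pos[of 1] by simp
  define J where "J = j - 1"
  have J1: "J \<ge> 1" and SJ: "Suc J = j" using j by (auto simp: J_def)
  define s where "s N t = (\<Sum>k\<in>{1..N}. erlang_density J (a k) t * (\<Prod>i\<in>{1..N}-{k}. 1 - exp (- a i * t)))"
    for N t
  define G where "G t = (if t > 0 then exp (-t) * I_integrand a j (exp (-t)) else 0)" for t
  define wt where "wt n t = c ^ Q * (erlang_density J (a (Suc n)) t * t ^ Q)" for n t
  define w where "w t = (\<Sum>n. wt n t)" for t
  have s_meas[measurable]: "s N \<in> borel_measurable lborel" for N
    unfolding s_def by measurable
  have EU_eq: "EU a N j = integral\<^sup>L lborel (s N)" for N
  proof -
    define h where "h k t = erlang_density J (a k) t * (\<Prod>i\<in>{1..N}-{k}. 1 - exp (- a i * t))" for k t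
    have h_int: "integrable lborel (h k)" if k: "k \<in> {1..N}" for k
    proof (rule Bochner_Integration.integrable_bound[OF erlang_integrable[of "a k" J]])
      show "0 < a k" using pos k by auto
      show "h k \<in> borel_measurable lborel" unfolding h_def by measurable
      show "AE t in lborel. norm (h k t) \<le> norm (erlang_density J (a k) t)"
      proof (rule AE_I2)
        fix t
        have e0: "0 \<le> erlang_density J (a k) t" using pos k by (intro erlang_density_nonneg) (auto simp: less_imp_le)
        show "norm (h k t) \<le> norm (erlang_density J (a k) t)"
        proof (cases "t < 0")
          case True thus ?thesis by (simp add: h_def erlang_density_def)
        next
          case False
          have p01: "0 \<le> (\<Prod>i\<in>{1..N}-{k}. 1 - exp (- a i * t)) \<and> (\<Prod>i\<in>{1..N}-{k}. 1 - exp (- a i * t)) \<le> 1"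
            using pos False by (intro conjI prod_nonneg prod_le_1) (auto intro!: mult_nonneg_nonneg less_imp_le[OF pos])
          show ?thesis using e0 p01 unfolding h_def
            by (simp add: abs_mult mult_left_le)
        qed
      qed
    qed
    have eq: "(LINT t:{0..}|lborel. a k * exp (- a k * t) * (a k * t) ^ (j - 1) / fact (j - 1) *
        (\<Prod>i\<in>{1..N} - {k}. 1 - exp (- a i * t))) = integral\<^sup>L lborel (h k)" for k
      unfolding set_lebesgue_integral_def
    proof (rule Bochner_Integration.integral_cong[OF refl])
      fix t
      show "indicator {0..} t *\<^sub>R (a k * exp (- a k * t) * (a k * t) ^ (j - 1) / fact (j - 1) *
        (\<Prod>i\<in>{1..N} - {k}. 1 - exp (- a i * t))) = h k t"
        unfolding h_def erlang_density_def J_def[symmetric]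
        by (cases "t < 0") (auto simp: SJ[symmetric] power_mult_distrib mult_ac)
    qed
    have "EU a N j = (\<Sum>k\<in>{1..N}. integral\<^sup>L lborel (h k))"
      unfolding EU_def using eq by simp
    also have "\<dots> = integral\<^sup>L lborel (\<lambda>t. \<Sum>k\<in>{1..N}. h k t)"
      by (rule Bochner_Integration.integral_sum[symmetric]) (use h_int in auto)
    also have "\<dots> = integral\<^sup>L lborel (s N)" by (simp add: s_def h_def [abs_def])
      (simp add: s_def [abs_def])
    finally show ?thesis .
  qed
  have wt_nonneg: "wt n t \<ge> 0" for n t
    using pos[of "Suc n"] c0 by (cases "t < 0") (auto simp: wt_def erlang_density_def)
  have wt_summable: "summable (\<lambda>n. wt n t)" for t
  proof (cases "t > 0")
    case True
    have "wt n t = (c ^ Q * t ^ (J + Q) / fact J) * (a (Suc n) ^ Suc J * exp (- a (Suc n) * t))" for n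
      using True by (simp add: wt_def erlang_density_def power_add field_simps)
    moreover have "summable (\<lambda>n. (c ^ Q * t ^ (J + Q) / fact J) * (a (Suc n) ^ Suc J * exp (- a (Suc n) * t)))"
      by (intro summable_mult summable_pow_exp[OF pos S True])
    ultimately show ?thesis by simp
  next
    case False
    hence "wt n t = 0" for n
      using Q1 by (cases "t = 0") (auto simp: wt_def erlang_density_def)
    thus ?thesis by simp
  qed
  have wt_int: "integrable lborel (wt n)" for n
    unfolding wt_def using pos[of "Suc n"]
    by (intro integrable_mult_right erlang_moment_integrable(1)) auto
  have wt_integral: "integral\<^sup>L lborel (wt n) = c ^ Q * fact (J + Q) / fact J * (1 / a (Suc n) ^ Q)" for n
    unfolding wt_def using pos[of "Suc n"] erlang_moment_integrable(2)[of "a (Suc n)" J Q]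
    by simp
  have w_int: "integrable lborel w"
    unfolding w_def
  proof (rule integrable_suminf[OF wt_int])
    show "AE x in lborel. summable (\<lambda>i. norm (wt i x))"
      using wt_summable wt_nonneg by (intro AE_I2) simp
    have eqn: "(\<lambda>i. integral\<^sup>L lborel (\<lambda>x. norm (wt i x))) = (\<lambda>i. c ^ Q * fact (J + Q) / fact J * (1 / a (Suc i) ^ Q))"
      using wt_nonneg wt_integral by (simp add: abs_of_nonneg del: times_divide_eq_right)
    show "summable (\<lambda>i. integral\<^sup>L lborel (\<lambda>x. norm (wt i x)))"
      unfolding eqn by (rule summable_mult[OF S])
  qed
  have w_nonneg: "w t \<ge> 0" for t
    unfolding w_def by (intro suminf_nonneg wt_summable wt_nonneg)
  have bound: "norm (s N t) \<le> w t" if N: "N \<ge> Suc Q" for N t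
  proof (cases "t < 0")
    case True
    hence "s N t = 0" by (simp add: s_def erlang_density_def)
    thus ?thesis using w_nonneg by simp
  next
    case False
    hence t0: "t \<ge> 0" by simp
    have e0: "0 \<le> erlang_density J (a k) t" if "k \<in> {1..N}" for k
      using pos that by (intro erlang_density_nonneg) (auto simp: less_imp_le)
    have p0: "0 \<le> (\<Prod>i\<in>{1..N}-{k}. 1 - exp (- a i * t))" for k
      using pos t0 by (intro prod_nonneg) (auto intro!: mult_nonneg_nonneg less_imp_le[OF pos])
    have s0: "s N t \<ge> 0" unfolding s_def using e0 p0 by (intro sum_nonneg mult_nonneg_nonneg) auto
    have "s N t \<le> (\<Sum>k\<in>{1..N}. erlang_density J (a k) t * (c * t) ^ Q)"
      unfolding s_def using e0 prod_bound[OF pos c t0 N]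
      by (intro sum_mono mult_left_mono) auto
    also have "\<dots> = (\<Sum>n<N. wt n t)"
      by (simp add: sum.atLeast1_atMost_eq wt_def power_mult_distrib mult_ac)
    also have "\<dots> \<le> w t"
      unfolding w_def by (intro sum_le_suminf wt_summable wt_nonneg) auto
    finally show ?thesis using s0 by simp
  qed
  have lim: "(\<lambda>N. s N t) \<longlonglongrightarrow> G t" for t
  proof (cases "t > 0")
    case False
    have "s N t = 0" for N
    proof (cases "t < 0")
      case True thus ?thesis by (simp add: s_def erlang_density_def)
    next
      case False
      with \<open>\<not> t > 0\<close> have "t = 0" by simp
      thus ?thesis using J1 by (simp add: s_def erlang_density_def zero_power)
    qed
    thus ?thesis using False by (simp add: G_def)
  next
    case True
    define x where "x = exp (-t)"
    define p where "p i = 1 - exp (- a i * t)" for i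
    have ppos: "p i > 0" if "i \<ge> 1" for i
      using pos[OF that] True by (simp add: p_def)
    define u where "u n = a (Suc n) ^ j * x powr a (Suc n) / (1 - x powr a (Suc n))" for n
    have prodeq: "(\<Prod>i\<in>{1..N}. p i) = (\<Prod>n<N. 1 - exp (-t) powr a (Suc n))" for N
      by (simp add: prod.atLeast1_atMost_eq p_def exp_powr_eq)
    have termeq: "erlang_density J (a k) t / p k = t ^ J / fact J * u (k - 1)" if "k \<ge> 1" for k
    proof -
      have "Suc (k - 1) = k" using that by simp
      hence "u (k - 1) = a k ^ j * exp (- a k * t) / (1 - exp (- a k * t))"
        by (simp add: u_def x_def exp_powr_eq)
      thus ?thesis using True
        by (simp add: erlang_density_def p_def SJ[symmetric] field_simps)
    qed
    have sumeq: "(\<Sum>k\<in>{1..N}. erlang_density J (a k) t / p k) = t ^ J / fact J * (\<Sum>n<N. u n)" for N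
    proof -
      have "(\<Sum>k\<in>{1..N}. erlang_density J (a k) t / p k) = (\<Sum>k\<in>{1..N}. t ^ J / fact J * u (k - 1))"
        by (intro sum.cong refl termeq) auto
      also have "\<dots> = (\<Sum>n<N. t ^ J / fact J * u n)" by (simp add: sum.atLeast1_atMost_eq)
      finally show ?thesis by (simp add: sum_distrib_left)
    qed
    have seq: "s N t = (\<Prod>i\<in>{1..N}. p i) * (\<Sum>k\<in>{1..N}. erlang_density J (a k) t / p k)" for N
      unfolding s_def sum_distrib_left
    proof (intro sum.cong refl)
      fix k assume k: "k \<in> {1..N}"
      have "(\<Prod>i\<in>{1..N}. p i) = p k * (\<Prod>i\<in>{1..N} - {k}. p i)"
        using k by (intro prod.remove) auto
      moreover have "p k \<noteq> 0" using ppos[of k] k by auto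
      moreover have "(\<Prod>i\<in>{1..N} - {k}. 1 - exp (- a i * t)) = (\<Prod>i\<in>{1..N} - {k}. p i)"
        by (simp add: p_def)
      ultimately show "erlang_density J (a k) t * (\<Prod>i\<in>{1..N} - {k}. 1 - exp (- a i * t)) =
          (\<Prod>i\<in>{1..N}. p i) * (erlang_density J (a k) t / p k)"
        by (simp add: field_simps)
    qed
    have limP: "(\<lambda>N. \<Prod>i\<in>{1..N}. p i) \<longlonglongrightarrow> F_fun x a"
      unfolding prodeq x_def by (rule prod_tendsto_F[OF pos S True])
    have su: "summable u"
      unfolding u_def x_def using summable_L[OF pos S True, of j] j by simp
    have limS: "(\<lambda>N. \<Sum>n<N. u n) \<longlonglongrightarrow> L_fun x a j"
    proof -
      have "L_fun x a j = suminf u" unfolding L_fun_def u_def[abs_def] by simp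
      thus ?thesis using summable_LIMSEQ[OF su] by simp
    qed
    have "(\<lambda>N. s N t) \<longlonglongrightarrow> F_fun x a * (t ^ J / fact J * L_fun x a j)"
      unfolding seq sumeq by (intro tendsto_mult limP tendsto_const limS)
    moreover have "G t = F_fun x a * (t ^ J / fact J * L_fun x a j)"
    proof -
      have "ln x = - t" by (simp add: x_def)
      moreover have "x > 0" by (simp add: x_def)
      ultimately show ?thesis using True
        by (simp add: G_def x_def[symmetric] I_integrand_def J_def field_simps)
    qed
    ultimately show ?thesis by simp
  qed
  have G_meas[measurable]: "G \<in> borel_measurable lborel"
    by (rule borel_measurable_LIMSEQ_real[OF lim]) simp
  have limS: "AE t in lborel. (\<lambda>N. s (N + Suc Q) t) \<longlonglongrightarrow> G t"
    by (rule AE_I2, rule LIMSEQ_ignore_initial_segment, rule lim)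
  have bndS: "AE t in lborel. norm (s (N + Suc Q) t) \<le> w t" for N
    using bound[of "N + Suc Q"] by simp
  have "(\<lambda>N. integral\<^sup>L lborel (s (N + Suc Q))) \<longlonglongrightarrow> integral\<^sup>L lborel G"
    by (rule integral_dominated_convergence[OF G_meas _ w_int limS bndS]) simp
  hence EU_lim: "(\<lambda>N. EU a N j) \<longlonglongrightarrow> integral\<^sup>L lborel G"
    unfolding EU_eq by (rule LIMSEQ_offset)
  have G_int: "integrable lborel G"
    by (rule integrable_dominated_convergence[OF G_meas _ w_int limS bndS]) simp
  have fin_part: "set_integrable lborel {0<..<1} (I_integrand a j) \<and> I_val a j = integral\<^sup>L lborel G"
  proof -
    define \<phi> where "\<phi> t = exp (-t) * I_integrand a j (exp (-t))" for t
    have G\<phi>: "G = (\<lambda>t. indicator {0<..} t *\<^sub>R \<phi> t)"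
      by (auto simp: G_def \<phi>_def fun_eq_iff indicator_def)
    have si: "set_integrable lborel {0<..} \<phi>"
      using G_int unfolding set_integrable_def G\<phi> .
    have Gint_eq: "integral\<^sup>L lborel G = integral {0<..} \<phi>"
      using set_borel_integral_eq_integral(2)[OF si] unfolding G\<phi> set_lebesgue_integral_def .
    have ai: "\<phi> absolutely_integrable_on {0<..}"
    proof -
      have i1: "integrable lborel (\<lambda>t. indicator {0<..} t *\<^sub>R \<phi> t)"
        using si by (simp add: set_integrable_def)
      have "integrable lebesgue (\<lambda>t. indicator {0<..} t *\<^sub>R \<phi> t)"
        by (subst integrable_completion) (use i1 borel_measurable_integrable in auto)
      thus ?thesis by (simp add: set_integrable_def)
    qed
    have img: "(\<lambda>t. exp (-t)) ` {0<..} = {0<..<1::real}"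
    proof (intro equalityI subsetI)
      fix x assume "x \<in> (\<lambda>t. exp (-t)) ` {0::real<..}"
      thus "x \<in> {0<..<1}" by auto
    next
      fix x :: real assume x: "x \<in> {0<..<1}"
      hence "x = exp (- (- ln x))" "- ln x \<in> {0<..}" by auto
      thus "x \<in> (\<lambda>t. exp (-t)) ` {0<..}" by blast
    qed
    have cov: "I_integrand a j absolutely_integrable_on {0<..<1} \<and>
        integral {0<..<1} (I_integrand a j) = integral {0<..} \<phi>"
    proof -
      have "(\<lambda>x. \<bar>- exp (- x)\<bar> * I_integrand a j (exp (- x))) absolutely_integrable_on {0<..} \<and>
          integral {0<..} (\<lambda>x. \<bar>- exp (- x)\<bar> * I_integrand a j (exp (- x))) = integral {0<..} \<phi>
        \<longleftrightarrow> I_integrand a j absolutely_integrable_on (\<lambda>t. exp (-t)) ` {0<..} \<and>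
          integral ((\<lambda>t. exp (-t)) ` {0<..}) (I_integrand a j) = integral {0<..} \<phi>"
        by (rule has_absolute_integral_change_of_variables_1')
          (auto intro!: derivative_eq_intros inj_onI)
      moreover have "(\<lambda>x. \<bar>- exp (- x)\<bar> * I_integrand a j (exp (- x))) = \<phi>"
        by (simp add: \<phi>_def[abs_def])
      ultimately show ?thesis using ai img by simp
    qed
    have meas: "(\<lambda>x. indicator {0<..<1} x *\<^sub>R I_integrand a j x) \<in> borel_measurable lborel"
    proof -
      have "(\<lambda>x. indicator {0<..<1} x *\<^sub>R I_integrand a j x) =
          (\<lambda>x. indicator {0<..<1} x * (G (- ln x) / x))"
      proof
        fix x :: real
        show "indicator {0<..<1} x *\<^sub>R I_integrand a j x = indicator {0<..<1} x * (G (- ln x) / x)"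
        proof (cases "x \<in> {0<..<1}")
          case True
          hence "G (- ln x) = x * I_integrand a j x" by (simp add: G_def)
          thus ?thesis using True by simp
        qed simp
      qed
      also have "\<dots> \<in> borel_measurable lborel" by measurable
      finally show ?thesis .
    qed
    have si2: "set_integrable lborel {0<..<1} (I_integrand a j)"
    proof -
      have "integrable lebesgue (\<lambda>x. indicator {0<..<1} x *\<^sub>R I_integrand a j x)"
        using cov by (simp add: set_integrable_def)
      hence "integrable lborel (\<lambda>x. indicator {0<..<1} x *\<^sub>R I_integrand a j x)"
        by (subst (asm) integrable_completion[OF meas])
      thus ?thesis by (simp add: set_integrable_def)
    qed
    have "I_val a j = integral {0<..<1} (I_integrand a j)"
      unfolding I_val_def xa by (rule set_borel_integral_eq_integral(2)[OF si2])
    also have "\<dots> = integral\<^sup>L lborel G" using cov Gint_eq by simp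
    finally show ?thesis using si2 by simp
  qed
  show ?thesis using fin_part EU_lim xa by simp
qed

end
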